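(* If $n\ge3$, then $$a_{n,i}=p(q+1)a_{n,i-1}-p^2q\,a_{n,i-2}+p^iq(q-1)a_{n-1,i-1},\qquad 3\le i\le n,$$ with $a_{n,1}=pq\sum_{j=1}^{n-1}a_{n-1,j}$ and $a_{n,2}=pa_{n,1}+p^2q(q-1)a_{n-1,1}$ for $n\ge2$, and $a_{1,1}=pq^2$.
   Context: An inversion sequence of length $n$ is a sequence $\rho=\rho_1\cdots\rho_n$ of integers with $1\le \rho_i\le i$ for all $i$; $I_{n,i}$ is the set of those of length $n$ with last letter $i$. Let $\mathrm{area}(\rho)=\rho_1+\cdots+\rho_n$ and $\mathrm{sper}(\rho)=n+\rho_1+\sum_{i=1}^{n-1}\max(\rho_{i+1}-\rho_i,0)$ (area and semi-perimeter of the associated bargraph). Define $a_{n,i}=a_{n,i}(p,q)=\sum_{\rho\in I_{n,i}}p^{\mathrm{area}(\rho)}q^{\mathrm{sper}(\rho)}$. *)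

theory Defs
  imports Main
begin

text \<open>Inversion sequences of length n, as lists rho with rho!k the (k+1)-th letter,
  satisfying 1 <= rho_i <= i (1-indexed).\<close>
definition inv_seqs :: "nat \<Rightarrow> nat list set" where
  "inv_seqs n = {rho. length rho = n \<and> (\<forall>k<n. 1 \<le> rho ! k \<and> rho ! k \<le> k + 1)}"

definition inv_seqs_last :: "nat \<Rightarrow> nat \<Rightarrow> nat list set" where
  "inv_seqs_last n i = {rho \<in> inv_seqs n. rho \<noteq> [] \<and> last rho = i}"

definition area :: "nat list \<Rightarrow> nat" where
  "area rho = sum_list rho"

text \<open>Semi-perimeter: n + rho_1 + sum_{i=1}^{n-1} max(rho_{i+1} - rho_i, 0);
  truncated subtraction on nat gives exactly the max with 0.\<close>
definition sper :: "nat list \<Rightarrow> nat" where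
  "sper rho = length rho + hd rho + (\<Sum>k<length rho - 1. rho ! (k + 1) - rho ! k)"

definition a_gf :: "'a::comm_ring_1 \<Rightarrow> 'a \<Rightarrow> nat \<Rightarrow> nat \<Rightarrow> 'a" where
  "a_gf p q n i = (\<Sum>rho\<in>inv_seqs_last n i. p ^ area rho * q ^ sper rho)"

end

theory Submission
  imports Defs
begin

lemma finite_inv_seqs: "finite (inv_seqs n)"
proof -
  have "inv_seqs n \<subseteq> {xs. set xs \<subseteq> {..n} \<and> length xs = n}"
    by (auto simp: inv_seqs_def in_set_conv_nth) (metis Suc_leI le_trans)
  moreover have "finite {xs. set xs \<subseteq> {..n} \<and> length xs = n}"
    by (rule finite_lists_length_eq) simp
  ultimately show ?thesis by (rule finite_subset)
qed

lemma image_append: "1 \<le> i \<Longrightarrow> i \<le> Suc n \<Longrightarrow>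
  inv_seqs_last (Suc n) i = (\<lambda>r. r @ [i]) ` inv_seqs n"
proof (intro set_eqI iffI)
  fix x assume "x \<in> inv_seqs_last (Suc n) i"
  hence x: "length x = Suc n" "\<forall>k<Suc n. 1 \<le> x ! k \<and> x ! k \<le> k + 1" "last x = i"
    by (auto simp: inv_seqs_last_def inv_seqs_def)
  have xne: "x \<noteq> []" using x(1) by auto
  define y where "y = butlast x"
  have y: "x = y @ [i]" unfolding y_def using xne x(3) by (metis append_butlast_last_id)
  have ly: "length y = n" using x(1) unfolding y_def by simp
  have "\<forall>k<n. 1 \<le> y ! k \<and> y ! k \<le> k + 1"
  proof (intro allI impI)
    fix k assume k: "k < n"
    have "x ! k = y ! k" unfolding y using k ly by (simp add: nth_append)
    moreover have "k < Suc n" using k by simp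
    ultimately show "1 \<le> y ! k \<and> y ! k \<le> k + 1" using x(2) by metis
  qed
  hence "y \<in> inv_seqs n" using ly by (simp add: inv_seqs_def)
  thus "x \<in> (\<lambda>r. r @ [i]) ` inv_seqs n" using y by blast
next
  fix x assume "1 \<le> i" "i \<le> Suc n" "x \<in> (\<lambda>r. r @ [i]) ` inv_seqs n"
  then obtain y where "x = y @ [i]" "y \<in> inv_seqs n" by blast
  thus "x \<in> inv_seqs_last (Suc n) i" using \<open>1 \<le> i\<close> \<open>i \<le> Suc n\<close>
    by (auto simp: inv_seqs_last_def inv_seqs_def nth_append less_Suc_eq)
qed

lemma area_app: "area (r @ [i]) = area r + i"
  by (simp add: area_def)

lemma sper_app: "r \<noteq> [] \<Longrightarrow> sper (r @ [i]) = sper r + 1 + (i - last r)"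
proof -
  assume r: "r \<noteq> []"
  then obtain m where m: "length r = Suc m" by (cases r) auto
  have s1: "sper (r @ [i]) = Suc (Suc m) + hd r + (\<Sum>k<Suc m. (r @ [i]) ! (k + 1) - (r @ [i]) ! k)"
    unfolding sper_def using m r by simp
  have s2: "sper r = Suc m + hd r + (\<Sum>k<m. r ! (k + 1) - r ! k)"
    unfolding sper_def using m by simp
  have s3: "last r = r ! m" using m r by (simp add: last_conv_nth)
  have s4: "(\<Sum>k<Suc m. (r @ [i]) ! (k + 1) - (r @ [i]) ! k)
      = (\<Sum>k<m. (r @ [i]) ! (k + 1) - (r @ [i]) ! k) + ((r @ [i]) ! (m + 1) - (r @ [i]) ! m)"
    by (rule sum.lessThan_Suc)
  have s5: "(r @ [i]) ! (m + 1) = i" "(r @ [i]) ! m = r ! m" using m by (simp_all add: nth_append)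
  have s6: "(\<Sum>k<m. (r @ [i]) ! (k + 1) - (r @ [i]) ! k) = (\<Sum>k<m. r ! (k + 1) - r ! k)"
    using m by (intro sum.cong) (auto simp: nth_append)
  show ?thesis unfolding s1 s2 s3 s4 s5 s6 by simp
qed

lemma key:
  fixes p q :: "'a::comm_ring_1"
  assumes "1 \<le> n" "1 \<le> i" "i \<le> Suc n"
  shows "a_gf p q (Suc n) i = p ^ i * q * (\<Sum>j\<in>{1..n}. a_gf p q n j * q ^ (i - j))"
proof -
  have inj: "inj_on (\<lambda>r. r @ [i]) (inv_seqs n)" by (auto simp: inj_on_def)
  have ne: "\<And>r. r \<in> inv_seqs n \<Longrightarrow> r \<noteq> []" using assms(1) by (auto simp: inv_seqs_def)
  have "a_gf p q (Suc n) i = (\<Sum>r\<in>inv_seqs n. p ^ area (r @ [i]) * q ^ sper (r @ [i]))"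
    unfolding a_gf_def image_append[OF assms(2,3)] sum.reindex[OF inj] by simp
  also have "\<dots> = (\<Sum>r\<in>inv_seqs n. p ^ i * q * (p ^ area r * q ^ sper r * q ^ (i - last r)))"
    by (intro sum.cong refl) (simp add: area_app sper_app ne power_add mult_ac)
  also have "\<dots> = p ^ i * q * (\<Sum>r\<in>inv_seqs n. p ^ area r * q ^ sper r * q ^ (i - last r))"
    by (simp add: sum_distrib_left)
  also have "(\<Sum>r\<in>inv_seqs n. p ^ area r * q ^ sper r * q ^ (i - last r))
     = (\<Sum>j\<in>{1..n}. \<Sum>r\<in>{x \<in> inv_seqs n. last x = j}. p ^ area r * q ^ sper r * q ^ (i - last r))"
  proof (rule sum.group[symmetric])
    show "finite (inv_seqs n)" by (rule finite_inv_seqs)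
    show "finite {1..n}" by simp
    show "last ` inv_seqs n \<subseteq> {1..n}"
    proof
      fix j assume "j \<in> last ` inv_seqs n"
      then obtain r where r: "r \<in> inv_seqs n" "j = last r" by blast
      have "r \<noteq> []" using r(1) ne by blast
      have lr: "length r = n" "\<forall>k<n. 1 \<le> r ! k \<and> r ! k \<le> k + 1"
        using r(1) by (auto simp: inv_seqs_def)
      have "j = r ! (n - 1)" using r(2) \<open>r \<noteq> []\<close> lr(1) by (simp add: last_conv_nth)
      moreover have "n - 1 < n" using assms(1) by simp
      ultimately have "1 \<le> j \<and> j \<le> n - 1 + 1" using lr(2) by blast
      thus "j \<in> {1..n}" using assms(1) by simp
    qed
  qed
  also have "\<dots> = (\<Sum>j\<in>{1..n}. a_gf p q n j * q ^ (i - j))"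
  proof (intro sum.cong refl)
    fix j
    have e: "{x \<in> inv_seqs n. last x = j} = inv_seqs_last n j"
      using ne by (auto simp: inv_seqs_last_def)
    show "(\<Sum>r\<in>{x \<in> inv_seqs n. last x = j}. p ^ area r * q ^ sper r * q ^ (i - last r))
        = a_gf p q n j * q ^ (i - j)"
      unfolding e a_gf_def sum_distrib_right
      by (intro sum.cong refl) (simp add: inv_seqs_last_def)
  qed
  finally show ?thesis .
qed

lemma termwise:
  fixes q x :: "'a::comm_ring_1"
  assumes "j \<ge> 1"
  shows "x * q ^ (Suc (Suc k) - j) = (q + 1) * (x * q ^ (Suc k - j)) - q * (x * q ^ (k - j))
           + (q - 1) * (if j = Suc k then x else 0)"
proof (cases "j \<le> k")
  case True
  then obtain d where d: "k = j + d" by (metis le_add_diff_inverse)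
  have e: "Suc (Suc k) - j = Suc (Suc d)" "Suc k - j = Suc d" "k - j = d" "(j = Suc k) = False"
    using d by auto
  show ?thesis unfolding e by (simp add: algebra_simps)
next
  case False
  show ?thesis
  proof (cases "j = Suc k")
    case True
    hence e: "Suc (Suc k) - j = 1" "Suc k - j = 0" "k - j = 0" "(j = Suc k) = True" by auto
    show ?thesis unfolding e by (simp add: algebra_simps)
  next
    case F2: False
    hence e: "Suc (Suc k) - j = 0" "Suc k - j = 0" "k - j = 0" "(j = Suc k) = False" using False by auto
    show ?thesis unfolding e by (simp add: algebra_simps)
  qed
qed

lemma alg:
  fixes p q :: "'a::comm_ring_1"
  assumes "P = p * P1" "P1 = p * P0" "X = (q + 1) * Y - q * Z + (q - 1) * W"
  shows "P * q * X = p * (q + 1) * (P1 * q * Y) - p ^ 2 * q * (P0 * q * Z) + P * q * (q - 1) * W"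
  unfolding assms by (simp add: algebra_simps power2_eq_square)

theorem proposition2p6:
  fixes p q :: "'a::comm_ring_1"
  shows "(\<forall>n i. 3 \<le> n \<longrightarrow> 3 \<le> i \<longrightarrow> i \<le> n \<longrightarrow>
           a_gf p q n i = p * (q + 1) * a_gf p q n (i - 1) - p ^ 2 * q * a_gf p q n (i - 2)
                          + p ^ i * q * (q - 1) * a_gf p q (n - 1) (i - 1))
       \<and> (\<forall>n. 2 \<le> n \<longrightarrow> a_gf p q n 1 = p * q * (\<Sum>j = 1..n - 1. a_gf p q (n - 1) j))
       \<and> (\<forall>n. 2 \<le> n \<longrightarrow> a_gf p q n 2 = p * a_gf p q n 1 + p ^ 2 * q * (q - 1) * a_gf p q (n - 1) 1)
       \<and> a_gf p q 1 1 = p * q ^ 2"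
proof (intro conjI allI impI)
  fix n i :: nat
  assume n: "3 \<le> n" and i: "3 \<le> i" "i \<le> n"
  obtain m where m: "n = Suc m" using n by (cases n) auto
  define k where "k = i - 2"
  have k: "i = Suc (Suc k)" using i unfolding k_def by simp
  define S where "S l = (\<Sum>j\<in>{1..m}. a_gf p q m j * q ^ (l - j))" for l
  have m1: "1 \<le> m" using n m by simp
  have A: "a_gf p q n i = p ^ i * q * S i" unfolding S_def m
    by (rule key[OF m1]) (use i m in auto)
  have i1: "i - 1 = Suc k" using k by simp
  have B: "a_gf p q n (Suc k) = p ^ (Suc k) * q * S (Suc k)" unfolding S_def m
    by (rule key[OF m1]) (use i m k in auto)
  have i2: "i - 2 = k" using k by simp
  have C: "a_gf p q n k = p ^ k * q * S k" unfolding S_def m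
    by (rule key[OF m1]) (use i m k in auto)
  have "S i = (\<Sum>j\<in>{1..m}. (q + 1) * (a_gf p q m j * q ^ (Suc k - j)) - q * (a_gf p q m j * q ^ (k - j))
           + (q - 1) * (if j = Suc k then a_gf p q m j else 0))"
    unfolding S_def k by (intro sum.cong refl termwise) simp
  also have "\<dots> = (q + 1) * S (Suc k) - q * S k + (q - 1) * a_gf p q m (Suc k)"
  proof -
    have "Suc k \<in> {1..m}" using i k m by simp
    hence dl: "(\<Sum>j\<in>{1..m}. (q - 1) * (if j = Suc k then a_gf p q m j else 0)) = (q - 1) * a_gf p q m (Suc k)"
      by (simp add: sum_distrib_left[symmetric] sum.delta)
    show ?thesis unfolding S_def
      by (simp only: sum.distrib sum_subtractf sum_distrib_left dl)
  qed
  finally have SS: "S i = (q + 1) * S (Suc k) - q * S k + (q - 1) * a_gf p q m (Suc k)" .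
  show "a_gf p q n i = p * (q + 1) * a_gf p q n (i - 1) - p ^ 2 * q * a_gf p q n (i - 2)
                          + p ^ i * q * (q - 1) * a_gf p q (n - 1) (i - 1)"
    unfolding i1 i2 A B C unfolding m diff_Suc_1 unfolding k
    by (rule alg[OF _ _ SS[unfolded k]]) simp_all
next
  fix n :: nat assume n: "2 \<le> n"
  obtain m where m: "n = Suc m" using n by (cases n) auto
  have m1: "1 \<le> m" using n m by simp
  show "a_gf p q n 1 = p * q * (\<Sum>j = 1..n - 1. a_gf p q (n - 1) j)"
    unfolding m using key[OF m1, of 1 p q] by simp
next
  fix n :: nat assume n: "2 \<le> n"
  obtain m where m: "n = Suc m" using n by (cases n) auto
  have m1: "1 \<le> m" using n m by simp
  have e1: "a_gf p q n 1 = p * q * (\<Sum>j\<in>{1..m}. a_gf p q m j)"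
    unfolding m using key[OF m1, of 1 p q] by simp
  have "a_gf p q n 2 = p ^ 2 * q * (\<Sum>j\<in>{1..m}. a_gf p q m j * q ^ (2 - j))"
    unfolding m using key[OF m1, of 2 p q] m1 by simp
  also have "(\<Sum>j\<in>{1..m}. a_gf p q m j * q ^ (2 - j))
      = (\<Sum>j\<in>{1..m}. a_gf p q m j + (q - 1) * (if j = 1 then a_gf p q m j else 0))"
  proof (intro sum.cong refl)
    fix j assume "j \<in> {1..m}"
    thus "a_gf p q m j * q ^ (2 - j) = a_gf p q m j + (q - 1) * (if j = 1 then a_gf p q m j else 0)"
      by (cases "j = 1") (auto simp: algebra_simps)
  qed
  also have "\<dots> = (\<Sum>j\<in>{1..m}. a_gf p q m j) + (q - 1) * a_gf p q m 1"
    using m1 by (simp add: sum.distrib sum_distrib_left[symmetric] sum.delta)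
  finally show "a_gf p q n 2 = p * a_gf p q n 1 + p ^ 2 * q * (q - 1) * a_gf p q (n - 1) 1"
    unfolding e1 using m by (simp add: algebra_simps power2_eq_square)
next
  have "inv_seqs_last 1 1 = {[1]}"
    by (auto simp: inv_seqs_last_def inv_seqs_def length_Suc_conv)
  thus "a_gf p q 1 1 = p * q ^ 2"
    by (simp add: a_gf_def area_def sper_def power2_eq_square)
qed

end
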